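(* Suppose Assumptions 1, 2, 3' and 5 hold, with all expectations finite. Then $W_{TC}=\Delta$.
   Context: Standing framework. Let $(Y(0),Y(1),V,G,T)$ be random variables on a common probability space, with $G\in\{0,1\}$ (group; $G=1$ is the "treatment group"), $T\in\{0,1\}$ (period), $V$ real-valued, and let $(v_{gt})_{(g,t)\in\{0,1\}^2}$ be real constants. The treatment is $D=1\{V\geq v_{GT}\}$ and the potential treatments are $D(t)=1\{V\geq v_{Gt}\}$, $t\in\{0,1\}$, so that $D=D(T)$. The observed outcome is $Y=DY(1)+(1-D)Y(0)$. For any random variable $R$, $R_{gt}$ denotes a random variable distributed as $R$ conditional on $\{G=g,T=t\}$ and $R_{dgt}$ one distributed as $R$ conditional on $\{D=d,G=g,T=t\}$. Let $S=\{D(0)<D(1),\,G=1\}$ and $\Delta=E(Y(1)-Y(0)\mid S,T=1)$. Assumption 1: $D=1\{V\geq v_{GT}\}$ with $V$ independent of $T$ conditional on $G$. Assumption 2: $E(D_{11})>E(D_{10})$ and $E(D_{11})-E(D_{10})>E(D_{01})-E(D_{00})$. Assumption 3' (conditional common trends): for each $d\in\{0,1\}$, $E(Y(d)\mid G,T=1,D(0)=d)-E(Y(d)\mid G,T=0,D(0)=d)$ does not depend on $G$. Assumption 5: $0<E(D_{01})=E(D_{00})<1$. For $d\in\{0,1\}$ let $\delta_d=E(Y_{d01})-E(Y_{d00})$, and define $$W_{TC}=\frac{E(Y\mid G=1,T=1)-E\big(Y+(1-D)\delta_0+D\delta_1\mid G=1,T=0\big)}{E(D\mid G=1,T=1)-E(D\mid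 G=1,T=0)}.$$ *)

theory Defs
  imports "HOL-Probability.Probability"
begin

definition cexp :: "'a measure \<Rightarrow> ('a \<Rightarrow> real) \<Rightarrow> 'a set \<Rightarrow> real" where
  "cexp M X A = (LINT x:A|M. X x) / measure M A"

definition ptreat :: "('a \<Rightarrow> real) \<Rightarrow> ('a \<Rightarrow> real) \<Rightarrow> (real \<Rightarrow> real \<Rightarrow> real) \<Rightarrow> real \<Rightarrow> 'a \<Rightarrow> real" where
  "ptreat V G v t x = (if V x \<ge> v (G x) t then 1 else 0)"

definition treat :: "('a \<Rightarrow> real) \<Rightarrow> ('a \<Rightarrow> real) \<Rightarrow> ('a \<Rightarrow> real) \<Rightarrow> (real \<Rightarrow> real \<Rightarrow> real) \<Rightarrow> 'a \<Rightarrow> real" where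
  "treat V G T v x = ptreat V G v (T x) x"

definition outcome :: "('a \<Rightarrow> real) \<Rightarrow> ('a \<Rightarrow> real) \<Rightarrow> ('a \<Rightarrow> real) \<Rightarrow> 'a \<Rightarrow> real" where
  "outcome D Y0 Y1 x = D x * Y1 x + (1 - D x) * Y0 x"

end

theory Submission imports Defs begin

lemma set_int_zero_null:
  fixes f :: "'a \<Rightarrow> real"
  assumes "finite_measure M" "A \<in> sets M" "measure M A = 0" "f \<in> borel_measurable M"
  shows "(LINT x:A|M. f x) = 0"
proof -
  have "A \<in> null_sets M" using assms finite_measure.emeasure_eq_measure[OF assms(1), of A] by auto
  hence "AE x in M. x \<notin> A" by (rule AE_not_in)
  hence "AE x in M. indicator A x *\<^sub>R f x = (0::real)" by eventually_elim auto
  hence "integral\<^sup>L M (\<lambda>x. indicator A x *\<^sub>R f x) = integral\<^sup>L M (\<lambda>x. 0::real)"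
    using assms by (intro integral_cong_AE) auto
  thus ?thesis by (simp add: set_lebesgue_integral_def)
qed

lemma set_int_eq_mcexp:
  fixes f :: "'a \<Rightarrow> real"
  assumes "finite_measure M" "A \<in> sets M" "f \<in> borel_measurable M"
  shows "(LINT x:A|M. f x) = measure M A * cexp M f A"
proof (cases "measure M A = 0")
  case True thus ?thesis using set_int_zero_null[OF assms(1,2) True assms(3)] by simp
next
  case False thus ?thesis by (simp add: cexp_def)
qed

lemma set_int_AE_eq:
  fixes f :: "'a \<Rightarrow> real"
  assumes "A \<in> sets M" "B \<in> sets M" "N \<in> null_sets M" "\<And>x. x \<in> space M \<Longrightarrow> x \<notin> N \<Longrightarrow> x \<in> A \<longleftrightarrow> x \<in> B"
    "f \<in> borel_measurable M"
  shows "(LINT x:A|M. f x) = (LINT x:B|M. f x)" "measure M A = measure M B"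
proof -
  have ae: "AE x in M. x \<in> A \<longleftrightarrow> x \<in> B"
    using AE_not_in[OF assms(3)] AE_space by eventually_elim (use assms(4) in auto)
  have "AE x in M. indicator A x *\<^sub>R f x = indicator B x *\<^sub>R f x"
    using ae by eventually_elim (auto simp: indicator_def)
  hence "integral\<^sup>L M (\<lambda>x. indicator A x *\<^sub>R f x) = integral\<^sup>L M (\<lambda>x. indicator B x *\<^sub>R f x)"
    using assms by (intro integral_cong_AE) auto
  thus "(LINT x:A|M. f x) = (LINT x:B|M. f x)" by (simp add: set_lebesgue_integral_def)
  show "measure M A = measure M B" using measure_eq_AE[OF ae assms(1,2)] .
qed

theorem theorem2:
  fixes M :: "'a measure" and Y0 Y1 V G T :: "'a \<Rightarrow> real" and v :: "real \<Rightarrow> real \<Rightarrow> real"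
  assumes P: "prob_space M"
    and rvY0: "Y0 \<in> borel_measurable M" and rvY1: "Y1 \<in> borel_measurable M"
    and rvV: "V \<in> borel_measurable M" and rvG: "G \<in> borel_measurable M"
    and rvT: "T \<in> borel_measurable M"
    and G01: "\<forall>x\<in>space M. G x \<in> {0, 1}" and T01: "\<forall>x\<in>space M. T x \<in> {0, 1}"
    and cells: "\<forall>g\<in>{0,1}. \<forall>t\<in>{0,1}. measure M {x\<in>space M. G x = g \<and> T x = t} > 0"
    and intY0: "integrable M Y0" and intY1: "integrable M Y1"
    \<comment> \<open>Assumption 1: V independent of T conditional on G\<close>
    and A1: "\<forall>g\<in>{0,1}. \<forall>t\<in>{0,1}. \<forall>B\<in>sets borel.
        measure M {x\<in>space M. V x \<in> B \<and> T x = t \<and> G x = g} * measure M {x\<in>space M. G x = g}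
      = measure M {x\<in>space M. V x \<in> B \<and> G x = g} * measure M {x\<in>space M. T x = t \<and> G x = g}"
    \<comment> \<open>Assumption 2\<close>
    and A2a: "cexp M (treat V G T v) {x\<in>space M. G x = 1 \<and> T x = 1}
            > cexp M (treat V G T v) {x\<in>space M. G x = 1 \<and> T x = 0}"
    and A2b: "cexp M (treat V G T v) {x\<in>space M. G x = 1 \<and> T x = 1}
              - cexp M (treat V G T v) {x\<in>space M. G x = 1 \<and> T x = 0}
            > cexp M (treat V G T v) {x\<in>space M. G x = 0 \<and> T x = 1}
              - cexp M (treat V G T v) {x\<in>space M. G x = 0 \<and> T x = 0}"
    \<comment> \<open>Assumption 3': conditional common trends\<close>
    and A3: "\<forall>d\<in>{0::real,1}. \<forall>g\<in>{0,1}. \<forall>g'\<in>{0,1}.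
        cexp M (if d = 1 then Y1 else Y0) {x\<in>space M. G x = g \<and> T x = 1 \<and> ptreat V G v 0 x = d}
      - cexp M (if d = 1 then Y1 else Y0) {x\<in>space M. G x = g \<and> T x = 0 \<and> ptreat V G v 0 x = d}
      = cexp M (if d = 1 then Y1 else Y0) {x\<in>space M. G x = g' \<and> T x = 1 \<and> ptreat V G v 0 x = d}
      - cexp M (if d = 1 then Y1 else Y0) {x\<in>space M. G x = g' \<and> T x = 0 \<and> ptreat V G v 0 x = d}"
    \<comment> \<open>Assumption 5\<close>
    and A5a: "0 < cexp M (treat V G T v) {x\<in>space M. G x = 0 \<and> T x = 1}"
    and A5b: "cexp M (treat V G T v) {x\<in>space M. G x = 0 \<and> T x = 1}
            = cexp M (treat V G T v) {x\<in>space M. G x = 0 \<and> T x = 0}"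
    and A5c: "cexp M (treat V G T v) {x\<in>space M. G x = 0 \<and> T x = 1} < 1"
  shows "(let D = treat V G T v; Y = outcome D Y0 Y1;
             \<delta> = (\<lambda>d. cexp M Y {x\<in>space M. D x = d \<and> G x = 0 \<and> T x = 1}
                     - cexp M Y {x\<in>space M. D x = d \<and> G x = 0 \<and> T x = 0})
         in (cexp M Y {x\<in>space M. G x = 1 \<and> T x = 1}
              - cexp M (\<lambda>x. Y x + (1 - D x) * \<delta> 0 + D x * \<delta> 1) {x\<in>space M. G x = 1 \<and> T x = 0})
            / (cexp M D {x\<in>space M. G x = 1 \<and> T x = 1} - cexp M D {x\<in>space M. G x = 1 \<and> T x = 0}))
       = cexp M (\<lambda>x. Y1 x - Y0 x)
           {x\<in>space M. ptreat V G v 0 x < ptreat V G v 1 x \<and> G x = 1 \<and> T x = 1}"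
proof -
  interpret prob_space M by (rule P)
  note [measurable] = rvY0 rvY1 rvV rvG rvT
  have mP[measurable]: "ptreat V G v t \<in> borel_measurable M" for t
  proof -
    have "ptreat V G v t \<in> borel_measurable M \<longleftrightarrow> (\<lambda>x. if G x = 0 then (if v 0 t \<le> V x then 1 else 0) else (if v 1 t \<le> V x then 1 else 0::real)) \<in> borel_measurable M"
      by (rule measurable_cong) (use G01 in \<open>auto simp: ptreat_def\<close>)
    also have "\<dots>" by measurable
    finally show ?thesis .
  qed
  define D where "D = treat V G T v"
  have mD[measurable]: "D \<in> borel_measurable M"
  proof -
    have "D \<in> borel_measurable M \<longleftrightarrow> (\<lambda>x. if T x = 0 then ptreat V G v 0 x else ptreat V G v 1 x) \<in> borel_measurable M"
      by (rule measurable_cong) (use T01 in \<open>auto simp: D_def treat_def\<close>)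
    also have "\<dots>" by measurable
    finally show ?thesis .
  qed
  have D01: "D x \<in> {0,1}" for x by (simp add: D_def treat_def ptreat_def)
  define Y where "Y = outcome D Y0 Y1"
  have mY[measurable]: "Y \<in> borel_measurable M" unfolding Y_def outcome_def by measurable
  have iY: "integrable M Y"
  proof (rule Bochner_Integration.integrable_bound[where f="\<lambda>x. \<bar>Y0 x\<bar> + \<bar>Y1 x\<bar>"])
    show "integrable M (\<lambda>x. \<bar>Y0 x\<bar> + \<bar>Y1 x\<bar>)" using intY0 intY1 by auto
    show "AE x in M. norm (Y x) \<le> norm (\<bar>Y0 x\<bar> + \<bar>Y1 x\<bar>)"
    proof (rule AE_I2)
      fix x have "D x = 0 \<or> D x = 1" using D01[of x] by auto
      thus "norm (Y x) \<le> norm (\<bar>Y0 x\<bar> + \<bar>Y1 x\<bar>)" by (auto simp: Y_def outcome_def)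
    qed
  qed (rule mY)
  have Cpos: "measure M {x\<in>space M. G x = g \<and> T x = t} > 0" if "g \<in> {0,1}" "t \<in> {0,1}" for g t
    using cells that by auto
  have rgpos: "measure M {x\<in>space M. G x = g} > 0" if "g \<in> {0,1}" for g
  proof -
    have "measure M {x\<in>space M. G x = g \<and> T x = 0} \<le> measure M {x\<in>space M. G x = g}"
      by (rule finite_measure_mono) auto
    thus ?thesis using Cpos[of g 0] that by auto
  qed
  have tr: "measure M {x\<in>space M. G x = g \<and> T x = t \<and> c \<le> V x}
     = measure M {x\<in>space M. G x = g \<and> c \<le> V x} * measure M {x\<in>space M. G x = g \<and> T x = t} / measure M {x\<in>space M. G x = g}"
    if "g \<in> {0,1}" "t \<in> {0,1}" for g t c
  proof -
    have e: "measure M {x\<in>space M. V x \<in> {c..} \<and> T x = t \<and> G x = g} * measure M {x\<in>space M. G x = g}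
      = measure M {x\<in>space M. V x \<in> {c..} \<and> G x = g} * measure M {x\<in>space M. T x = t \<and> G x = g}"
      using bspec[OF bspec[OF bspec[OF A1 that(1)] that(2)], of "{c..}"] by simp
    have s1: "{x\<in>space M. V x \<in> {c..} \<and> T x = t \<and> G x = g} = {x\<in>space M. G x = g \<and> T x = t \<and> c \<le> V x}" by auto
    have s2: "{x\<in>space M. V x \<in> {c..} \<and> G x = g} = {x\<in>space M. G x = g \<and> c \<le> V x}" by auto
    have s3: "{x\<in>space M. T x = t \<and> G x = g} = {x\<in>space M. G x = g \<and> T x = t}" by auto
    show ?thesis using e rgpos[OF that(1)] unfolding s1 s2 s3 by (simp add: field_simps)
  qed
  have cD: "cexp M D {x\<in>space M. G x = g \<and> T x = t} = measure M {x\<in>space M. G x = g \<and> v g t \<le> V x} / measure M {x\<in>space M. G x = g}"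
    if "g \<in> {0,1}" "t \<in> {0,1}" for g t
  proof -
    have "(LINT x:{x\<in>space M. G x = g \<and> T x = t}|M. D x) = integral\<^sup>L M (indicator {x\<in>space M. G x = g \<and> T x = t \<and> v g t \<le> V x})"
      unfolding set_lebesgue_integral_def
      by (rule Bochner_Integration.integral_cong[OF refl]) (auto simp: indicator_def D_def treat_def ptreat_def)
    also have "\<dots> = measure M {x\<in>space M. G x = g \<and> T x = t \<and> v g t \<le> V x}"
      by (simp add: Int_absorb2 )
    finally show ?thesis unfolding cexp_def tr[OF that] using Cpos[OF that] by simp
  qed
  define C where "C = (\<lambda>g t. {x\<in>space M. G x = g \<and> T x = t})"
  have mC[measurable]: "C g t \<in> sets M" for g t unfolding C_def by measurable
  define rg1 where "rg1 = measure M {x\<in>space M. G x = 1}"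
  have rg1: "rg1 > 0" using rgpos[of 1] by (simp add: rg1_def)
  define p where "p = measure M {x\<in>space M. G x = 1 \<and> v 1 0 \<le> V x} / rg1"
  define p1 where "p1 = measure M {x\<in>space M. G x = 1 \<and> v 1 1 \<le> V x} / rg1"
  define m11 where "m11 = measure M (C 1 1)"
  define m10 where "m10 = measure M (C 1 0)"
  have m11: "m11 > 0" using Cpos[of 1 1] by (simp add: m11_def C_def)
  have m10: "m10 > 0" using Cpos[of 1 0] by (simp add: m10_def C_def)
  have cD11: "cexp M D (C 1 1) = p1" using cD[of 1 1] by (simp add: C_def p1_def rg1_def)
  have cD10: "cexp M D (C 1 0) = p" using cD[of 1 0] by (simp add: C_def p_def rg1_def)
  have pp1: "p < p1" using A2a cD11 cD10 by (simp add: C_def D_def)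
  have bb: "v 1 1 \<le> v 1 0"
  proof (rule ccontr)
    assume "\<not> v 1 1 \<le> v 1 0"
    hence "measure M {x\<in>space M. G x = 1 \<and> v 1 1 \<le> V x} \<le> measure M {x\<in>space M. G x = 1 \<and> v 1 0 \<le> V x}"
      by (intro finite_measure_mono) auto
    hence "p1 \<le> p" unfolding p_def p1_def using rg1 by (simp add: divide_right_mono)
    thus False using pp1 by simp
  qed
  define U where "U = (\<lambda>t. {x\<in>space M. G x = 1 \<and> T x = t \<and> ptreat V G v 0 x = 1})"
  define L where "L = (\<lambda>t. {x\<in>space M. G x = 1 \<and> T x = t \<and> ptreat V G v 0 x = 0})"
  define S where "S = {x\<in>space M. ptreat V G v 0 x < ptreat V G v 1 x \<and> G x = 1 \<and> T x = 1}"
  have mU[measurable]: "U t \<in> sets M" for t unfolding U_def by measurable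
  have mL[measurable]: "L t \<in> sets M" for t unfolding L_def by measurable
  have mS[measurable]: "S \<in> sets M" unfolding S_def by measurable
  have Ueq: "U t = {x\<in>space M. G x = 1 \<and> T x = t \<and> v 1 0 \<le> V x}" for t
    by (auto simp: U_def ptreat_def)
  have measU: "measure M (U t) = p * measure M (C 1 t)" if "t \<in> {0,1}" for t
    unfolding Ueq using tr[of 1 t "v 1 0"] that by (simp add: p_def rg1_def C_def)
  have measL: "measure M (L t) = (1 - p) * measure M (C 1 t)" if "t \<in> {0,1}" for t
  proof -
    have "C 1 t = U t \<union> L t" by (auto simp: C_def U_def L_def ptreat_def)
    moreover have "U t \<inter> L t = {}" by (auto simp: U_def L_def)
    ultimately have "measure M (C 1 t) = measure M (U t) + measure M (L t)"
      using finite_measure_Union[of "U t" "L t"] by simp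
    thus ?thesis using measU[OF that] by (simp add: algebra_simps)
  qed
  have measS: "measure M S = (p1 - p) * m11"
  proof -
    have "S = {x\<in>space M. G x = 1 \<and> T x = 1 \<and> v 1 1 \<le> V x} - {x\<in>space M. G x = 1 \<and> T x = 1 \<and> v 1 0 \<le> V x}"
      using bb by (auto simp: S_def ptreat_def)
    hence "measure M S = measure M {x\<in>space M. G x = 1 \<and> T x = 1 \<and> v 1 1 \<le> V x} - measure M {x\<in>space M. G x = 1 \<and> T x = 1 \<and> v 1 0 \<le> V x}"
      using bb by (simp, intro finite_measure_Diff) auto
    thus ?thesis using tr[of 1 1 "v 1 0"] tr[of 1 1 "v 1 1"] by (simp add: p_def p1_def rg1_def m11_def C_def algebra_simps)
  qed
  have iind: "integrable M (\<lambda>x. indicator A x *\<^sub>R f x)" if "A \<in> sets M" "integrable M f" for A and f :: "'a \<Rightarrow> real"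
    using integrable_mult_indicator[OF that] .
  have I11: "(LINT x:C 1 1|M. Y x) = (LINT x:U 1|M. Y1 x) + (LINT x:L 1|M. Y0 x) + (LINT x:S|M. Y1 x - Y0 x)"
  proof -
    have "integral\<^sup>L M (\<lambda>x. indicator (C 1 1) x *\<^sub>R Y x) = integral\<^sup>L M (\<lambda>x. (indicator (U 1) x *\<^sub>R Y1 x + indicator (L 1) x *\<^sub>R Y0 x) + indicator S x *\<^sub>R (Y1 x - Y0 x))"
      by (rule Bochner_Integration.integral_cong[OF refl]) (use bb in \<open>auto simp: indicator_def C_def U_def L_def S_def Y_def outcome_def D_def treat_def ptreat_def\<close>)
    also have "\<dots> = integral\<^sup>L M (\<lambda>x. indicator (U 1) x *\<^sub>R Y1 x) + integral\<^sup>L M (\<lambda>x. indicator (L 1) x *\<^sub>R Y0 x) + integral\<^sup>L M (\<lambda>x. indicator S x *\<^sub>R (Y1 x - Y0 x))"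
      by (subst Bochner_Integration.integral_add, (intro Bochner_Integration.integrable_add iind mU mL mS intY0 intY1 Bochner_Integration.integrable_diff)+)+ simp
    finally show ?thesis by (simp add: set_lebesgue_integral_def)
  qed
  have I10: "(LINT x:C 1 0|M. Y x) = (LINT x:U 0|M. Y1 x) + (LINT x:L 0|M. Y0 x)"
  proof -
    have "integral\<^sup>L M (\<lambda>x. indicator (C 1 0) x *\<^sub>R Y x) = integral\<^sup>L M (\<lambda>x. indicator (U 0) x *\<^sub>R Y1 x + indicator (L 0) x *\<^sub>R Y0 x)"
      by (rule Bochner_Integration.integral_cong[OF refl]) (auto simp: indicator_def C_def U_def L_def Y_def outcome_def D_def treat_def ptreat_def)
    also have "\<dots> = integral\<^sup>L M (\<lambda>x. indicator (U 0) x *\<^sub>R Y1 x) + integral\<^sup>L M (\<lambda>x. indicator (L 0) x *\<^sub>R Y0 x)"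
      by (subst Bochner_Integration.integral_add, (intro iind mU mL intY0 intY1)+) simp
    finally show ?thesis by (simp add: set_lebesgue_integral_def)
  qed
  have I10': "(LINT x:C 1 0|M. Y x + (1 - D x) * d0 + D x * d1) = (LINT x:C 1 0|M. Y x) + d0 * measure M (L 0) + d1 * measure M (U 0)" for d0 d1
  proof -
    have fin: "emeasure M A < \<infinity>" for A by (simp add: emeasure_eq_measure)
    have "integral\<^sup>L M (\<lambda>x. indicator (C 1 0) x *\<^sub>R (Y x + (1 - D x) * d0 + D x * d1)) = integral\<^sup>L M (\<lambda>x. (indicator (C 1 0) x *\<^sub>R Y x + d0 * indicator (L 0) x) + d1 * indicator (U 0) x)"
      by (rule Bochner_Integration.integral_cong[OF refl]) (auto simp: indicator_def C_def U_def L_def D_def treat_def ptreat_def)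
    also have "\<dots> = integral\<^sup>L M (\<lambda>x. indicator (C 1 0) x *\<^sub>R Y x) + integral\<^sup>L M (\<lambda>x. d0 * indicator (L 0) x) + integral\<^sup>L M (\<lambda>x. d1 * indicator (U 0) x)"
      by (subst Bochner_Integration.integral_add, (intro Bochner_Integration.integrable_add iind mC iY integrable_mult_right integrable_real_indicator mL mU fin)+)+ simp
    also have "\<dots> = integral\<^sup>L M (\<lambda>x. indicator (C 1 0) x *\<^sub>R Y x) + d0 * measure M (L 0) + d1 * measure M (U 0)"
      using sets.sets_into_space[OF mL[of 0]] sets.sets_into_space[OF mU[of 0]] by (simp add: Int_absorb2)
    finally show ?thesis by (simp add: set_lebesgue_integral_def)
  qed
  define rg0 where "rg0 = measure M {x\<in>space M. G x = 0}"
  have rg0: "rg0 > 0" using rgpos[of 0] by (simp add: rg0_def)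
  have eq0: "measure M {x\<in>space M. G x = 0 \<and> v 0 1 \<le> V x} = measure M {x\<in>space M. G x = 0 \<and> v 0 0 \<le> V x}"
    using A5b cD[of 0 1] cD[of 0 0] rg0 unfolding D_def[symmetric] rg0_def by (simp add: field_simps)
  define N where "N = {x\<in>space M. G x = 0 \<and> min (v 0 0) (v 0 1) \<le> V x \<and> V x < max (v 0 0) (v 0 1)}"
  have mN: "N \<in> sets M" unfolding N_def by measurable
  have "measure M N = 0"
  proof -
    have "N = {x\<in>space M. G x = 0 \<and> min (v 0 0) (v 0 1) \<le> V x} - {x\<in>space M. G x = 0 \<and> max (v 0 0) (v 0 1) \<le> V x}"
      by (auto simp: N_def)
    hence "measure M N = measure M {x\<in>space M. G x = 0 \<and> min (v 0 0) (v 0 1) \<le> V x} - measure M {x\<in>space M. G x = 0 \<and> max (v 0 0) (v 0 1) \<le> V x}"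
      by (simp, intro finite_measure_Diff) auto
    thus ?thesis using eq0 by (cases "v 0 0 \<le> v 0 1") (simp_all add: min_def max_def)
  qed
  hence nN: "N \<in> null_sets M" using mN by (simp add: emeasure_eq_measure null_sets_def)
  have delta: "cexp M Y {x\<in>space M. D x = d \<and> G x = 0 \<and> T x = 1} - cexp M Y {x\<in>space M. D x = d \<and> G x = 0 \<and> T x = 0}
    = cexp M (if d = 1 then Y1 else Y0) {x\<in>space M. G x = 0 \<and> T x = 1 \<and> ptreat V G v 0 x = d}
    - cexp M (if d = 1 then Y1 else Y0) {x\<in>space M. G x = 0 \<and> T x = 0 \<and> ptreat V G v 0 x = d}"
    if d: "d \<in> {0,1}" for d
  proof -
    define Yd where "Yd = (if d = 1 then Y1 else Y0)"
    have mYd[measurable]: "Yd \<in> borel_measurable M" unfolding Yd_def by simp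
    have mQ[measurable]: "{x\<in>space M. D x = d \<and> G x = 0 \<and> T x = t} \<in> sets M" for t by measurable
    have mZ[measurable]: "{x\<in>space M. G x = 0 \<and> T x = t \<and> ptreat V G v 0 x = d} \<in> sets M" for t by measurable
    have QY: "(LINT x:{x\<in>space M. D x = d \<and> G x = 0 \<and> T x = t}|M. Y x) = (LINT x:{x\<in>space M. D x = d \<and> G x = 0 \<and> T x = t}|M. Yd x)" for t
      by (rule set_lebesgue_integral_cong[OF mQ]) (use d in \<open>auto simp: Y_def Yd_def outcome_def\<close>)
    have Q0: "{x\<in>space M. D x = d \<and> G x = 0 \<and> T x = 0} = {x\<in>space M. G x = 0 \<and> T x = 0 \<and> ptreat V G v 0 x = d}"
      by (auto simp: D_def treat_def)
    have ptw: "x \<in> {x\<in>space M. D x = d \<and> G x = 0 \<and> T x = 1} \<longleftrightarrow> x \<in> {x\<in>space M. G x = 0 \<and> T x = 1 \<and> ptreat V G v 0 x = d}"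
      if "x \<in> space M" "x \<notin> N" for x
      using that d by (auto simp: N_def D_def treat_def ptreat_def min_def max_def split: if_splits)
    note Q1 = set_int_AE_eq[OF mQ[of 1] mZ[of 1] nN ptw mYd]
    show ?thesis unfolding cexp_def Yd_def[symmetric] QY
      unfolding Q0 using Q1 by simp
  qed
  define c1 where "c1 = cexp M Y1 (U 1)"
  define c0 where "c0 = cexp M Y1 (U 0)"
  define e1 where "e1 = cexp M Y0 (L 1)"
  define e0 where "e0 = cexp M Y0 (L 0)"
  define Dl where "Dl = cexp M (\<lambda>x. Y1 x - Y0 x) S"
  have fm: "finite_measure M" by unfold_locales
  have cY11: "cexp M Y (C 1 1) = p * c1 + (1 - p) * e1 + (p1 - p) * Dl"
  proof -
    have "(LINT x:C 1 1|M. Y x) = m11 * (p * c1 + (1 - p) * e1 + (p1 - p) * Dl)"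
      unfolding I11 c1_def e1_def Dl_def
      using set_int_eq_mcexp[OF fm mU[of 1], of Y1] set_int_eq_mcexp[OF fm mL[of 1], of Y0]
        set_int_eq_mcexp[OF fm mS, of "\<lambda>x. Y1 x - Y0 x"] measU[of 1] measL[of 1] measS
      by (simp add: m11_def algebra_simps)
    thus ?thesis using m11 by (simp add: cexp_def m11_def)
  qed
  have cY10: "cexp M (\<lambda>x. Y x + (1 - D x) * d0 + D x * d1) (C 1 0) = p * c0 + (1 - p) * e0 + d0 * (1 - p) + d1 * p" for d0 d1
  proof -
    have "(LINT x:C 1 0|M. Y x + (1 - D x) * d0 + D x * d1) = m10 * (p * c0 + (1 - p) * e0 + d0 * (1 - p) + d1 * p)"
      unfolding I10' I10 c0_def e0_def set_int_eq_mcexp[OF fm mU[of 0] rvY1] set_int_eq_mcexp[OF fm mL[of 0] rvY0]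
        measU[of 0, simplified] measL[of 0, simplified]
      by (simp add: m10_def algebra_simps)
    thus ?thesis using m10 by (simp add: cexp_def m10_def)
  qed
  have A31: "c1 - c0 = cexp M Y {x\<in>space M. D x = 1 \<and> G x = 0 \<and> T x = 1} - cexp M Y {x\<in>space M. D x = 1 \<and> G x = 0 \<and> T x = 0}"
    unfolding delta[of 1, simplified] c1_def c0_def U_def using bspec[OF bspec[OF bspec[OF A3, of 1] , of 1], of 0] by simp
  have A30: "e1 - e0 = cexp M Y {x\<in>space M. D x = 0 \<and> G x = 0 \<and> T x = 1} - cexp M Y {x\<in>space M. D x = 0 \<and> G x = 0 \<and> T x = 0}"
    unfolding delta[of 0, simplified] e1_def e0_def L_def using bspec[OF bspec[OF bspec[OF A3, of 0] , of 1], of 0] by simp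
  have fin: "(p * c1 + (1 - p) * e1 + (p1 - p) * Dl - (p * c0 + (1 - p) * e0 + (e1 - e0) * (1 - p) + (c1 - c0) * p)) / (p1 - p) = Dl"
    using pp1 by (simp add: field_simps)
  show ?thesis
    unfolding Let_def D_def[symmetric] Y_def[symmetric] S_def[symmetric]
    using fin cY11 cY10 cD11 cD10 A31 A30 unfolding C_def Dl_def by simp
qed

end
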